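(* Let $1<p\le\infty$. Every symmetric space $X$ on $[0,1]$ with property $(D_p)$ has property $(UD_p)$.
   Context: A symmetric (rearrangement invariant) space $X$ on $[0,1]$ is a Banach space of (classes of) Lebesgue measurable functions on $[0,1]$ with the ideal property ($|x|\le|y|$ a.e., $y\in X$ imply $x\in X$, $\|x\|_X\le\|y\|_X$) such that if $y\in X$ and $x^*=y^*$ (non-increasing rearrangements) then $x\in X$ and $\|x\|_X=\|y\|_X$. For $1<p\le\infty$ ($\ell_\infty$ meaning $c_0$), $X$ has property $(D_p)$ if every sequence $(x_n)$ of pairwise disjointly supported elements with $\|x_n\|_X\le1$ has a subsequence $(x_{n_k})$ and a constant $C>0$ with $\|\sum_kc_kx_{n_k}\|_X\le C\|(c_k)\|_{\ell_p}$ for all $(c_k)\in\ell_p$; $X$ has property $(UD_p)$ if the constant $C$ can be chosen the same for all such sequences. *)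

theory Defs
  imports "HOL-Analysis.Analysis"
begin

abbreviation I01 :: "real measure" where
  "I01 \<equiv> lebesgue_on {0..1}"

definition distr_fun :: "(real \<Rightarrow> real) \<Rightarrow> real \<Rightarrow> real" where
  "distr_fun f s = measure I01 {t \<in> {0..1}. s < \<bar>f t\<bar>}"

definition rearr :: "(real \<Rightarrow> real) \<Rightarrow> real \<Rightarrow> ereal" where
  "rearr f t = Inf {ereal s | s. 0 \<le> s \<and> distr_fun f s \<le> t}"

text \<open>A (real) symmetric space on [0,1]: a set Xs of measurable functions with a
  norm N (functions equal a.e. identified via the ideal property), complete,
  with the ideal property and rearrangement invariance.\<close>
definition symmetric_space :: "(real \<Rightarrow> real) set \<Rightarrow> ((real \<Rightarrow> real) \<Rightarrow> real) \<Rightarrow> bool" where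
  "symmetric_space Xs N \<longleftrightarrow>
     Xs \<subseteq> borel_measurable I01 \<and>
     (\<lambda>t. 0) \<in> Xs \<and>
     (\<forall>f\<in>Xs. \<forall>g\<in>Xs. (\<lambda>t. f t + g t) \<in> Xs) \<and>
     (\<forall>f\<in>Xs. \<forall>c::real. (\<lambda>t. c * f t) \<in> Xs) \<and>
     (\<forall>f\<in>Xs. 0 \<le> N f) \<and>
     (\<forall>f\<in>Xs. \<forall>c::real. N (\<lambda>t. c * f t) = \<bar>c\<bar> * N f) \<and>
     (\<forall>f\<in>Xs. \<forall>g\<in>Xs. N (\<lambda>t. f t + g t) \<le> N f + N g) \<and>
     (\<forall>f\<in>Xs. N f = 0 \<longleftrightarrow> (AE t in I01. f t = 0)) \<and>
     (\<forall>x::nat \<Rightarrow> real \<Rightarrow> real. (\<forall>n. x n \<in> Xs) \<and>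
        (\<forall>e>0. \<exists>K. \<forall>m\<ge>K. \<forall>n\<ge>K. N (\<lambda>t. x m t - x n t) < e) \<longrightarrow>
        (\<exists>f\<in>Xs. (\<lambda>n. N (\<lambda>t. x n t - f t)) \<longlonglongrightarrow> 0)) \<and>
     (\<forall>f g. g \<in> Xs \<and> f \<in> borel_measurable I01 \<and> (AE t in I01. \<bar>f t\<bar> \<le> \<bar>g t\<bar>)
        \<longrightarrow> f \<in> Xs \<and> N f \<le> N g) \<and>
     (\<forall>f g. g \<in> Xs \<and> f \<in> borel_measurable I01 \<and> (\<forall>t\<in>{0..1}. rearr f t = rearr g t)
        \<longrightarrow> f \<in> Xs \<and> N f = N g)"

definition lp_fin :: "ereal \<Rightarrow> (nat \<Rightarrow> real) \<Rightarrow> nat \<Rightarrow> real" where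
  "lp_fin p c m =
     (if p = \<infinity> then Max (insert 0 ((\<lambda>k. \<bar>c k\<bar>) ` {..<m}))
      else (\<Sum>k<m. \<bar>c k\<bar> powr real_of_ereal p) powr (1 / real_of_ereal p))"

definition disjoint_seq :: "(nat \<Rightarrow> real \<Rightarrow> real) \<Rightarrow> bool" where
  "disjoint_seq x \<longleftrightarrow> (\<forall>n m. n \<noteq> m \<longrightarrow> (AE t in I01. x n t = 0 \<or> x m t = 0))"

definition upper_est :: "((real \<Rightarrow> real) \<Rightarrow> real) \<Rightarrow> ereal \<Rightarrow> real \<Rightarrow> (nat \<Rightarrow> real \<Rightarrow> real) \<Rightarrow> bool" where
  "upper_est N p C y \<longleftrightarrow>
     (\<forall>m c. N (\<lambda>t. \<Sum>k<m. c k * y k t) \<le> C * lp_fin p c m)"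

definition has_Dp :: "(real \<Rightarrow> real) set \<Rightarrow> ((real \<Rightarrow> real) \<Rightarrow> real) \<Rightarrow> ereal \<Rightarrow> bool" where
  "has_Dp Xs N p \<longleftrightarrow>
     (\<forall>x. (\<forall>n. x n \<in> Xs \<and> N (x n) \<le> 1) \<and> disjoint_seq x \<longrightarrow>
        (\<exists>r C. strict_mono r \<and> C > 0 \<and> upper_est N p C (\<lambda>k. x (r k))))"

definition has_UDp :: "(real \<Rightarrow> real) set \<Rightarrow> ((real \<Rightarrow> real) \<Rightarrow> real) \<Rightarrow> ereal \<Rightarrow> bool" where
  "has_UDp Xs N p \<longleftrightarrow>
     (\<exists>C>0. \<forall>x. (\<forall>n. x n \<in> Xs \<and> N (x n) \<le> 1) \<and> disjoint_seq x \<longrightarrow>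
        (\<exists>r. strict_mono r \<and> upper_est N p C (\<lambda>k. x (r k))))"

end

theory Submission
  imports Defs
begin


lemma fin_I01: "finite_measure I01"
  by (rule finite_measure_lebesgue_on) auto

lemma sets_distr:
  fixes f :: "real \<Rightarrow> real"
  assumes "f \<in> borel_measurable I01"
  shows "{t \<in> {0..1}. s < \<bar>f t\<bar>} \<in> sets I01"
proof -
  have "(\<lambda>t. \<bar>f t\<bar>) \<in> borel_measurable I01" using assms by (rule borel_measurable_abs)
  then have "{t \<in> space I01. s < \<bar>f t\<bar>} \<in> sets I01"
    unfolding borel_measurable_iff_greater by blast
  then show ?thesis by simp
qed

lemma fmeas_distr:
  fixes f :: "real \<Rightarrow> real"
  assumes "f \<in> borel_measurable I01"
  shows "{t \<in> {0..1}. s < \<bar>f t\<bar>} \<in> fmeasurable I01"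
  using sets_distr[OF assms] finite_measure.emeasure_finite[OF fin_I01]
  by (simp add: fmeasurable_def less_top)

lemma distr_le1: "distr_fun f s \<le> 1"
proof -
  have "distr_fun f s \<le> measure I01 {0..1}"
    unfolding distr_fun_def
    by (rule finite_measure.finite_measure_mono[OF fin_I01]) auto
  also have "\<dots> = 1" by (simp add: measure_restrict_space)
  finally show ?thesis .
qed

lemma distr_nonneg: "0 \<le> distr_fun f s"
  unfolding distr_fun_def by simp

lemma distr_mono:
  assumes "f \<in> borel_measurable I01" "s \<le> s'"
  shows "distr_fun f s' \<le> distr_fun f s"
  unfolding distr_fun_def
  by (rule finite_measure.finite_measure_mono[OF fin_I01]) (use assms sets_distr in auto)

lemma distr_add:
  fixes f g :: "real \<Rightarrow> real"
  assumes f: "f \<in> borel_measurable I01" and g: "g \<in> borel_measurable I01"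
    and ae: "AE t in I01. f t = 0 \<or> g t = 0" and s: "0 \<le> s"
  shows "distr_fun (\<lambda>t. f t + g t) s = distr_fun f s + distr_fun g s"
proof -
  have fg: "(\<lambda>t. f t + g t) \<in> borel_measurable I01" using f g by measurable
  let ?A = "{t \<in> {0..1}. s < \<bar>f t\<bar>}"
  let ?B = "{t \<in> {0..1}. s < \<bar>g t\<bar>}"
  let ?U = "{t \<in> {0..1}. s < \<bar>f t + g t\<bar>}"
  have "measure I01 ?U = measure I01 (?A \<union> ?B)"
  proof (rule measure_eq_AE)
    show "AE t in I01. (t \<in> ?U) = (t \<in> ?A \<union> ?B)"
      using ae by eventually_elim auto
    show "?U \<in> sets I01" using sets_distr[OF fg] .
    show "?A \<union> ?B \<in> sets I01" using sets_distr[OF f] sets_distr[OF g] by blast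
  qed
  also have "\<dots> = measure I01 ?A + measure I01 ?B"
  proof -
    have ae2: "AE t in I01. t \<notin> ?A \<or> t \<notin> ?B"
      using ae by eventually_elim (use s in auto)
    show ?thesis by (rule measure_Un_AE[OF ae2 fmeas_distr[OF f] fmeas_distr[OF g]])
  qed
  finally show ?thesis unfolding distr_fun_def .
qed

lemma distr_sum:
  fixes f :: "nat \<Rightarrow> real \<Rightarrow> real"
  assumes meas: "\<And>k. k < m \<Longrightarrow> f k \<in> borel_measurable I01"
    and disj: "\<And>k l. k < m \<Longrightarrow> l < m \<Longrightarrow> k \<noteq> l \<Longrightarrow> AE t in I01. f k t = 0 \<or> f l t = 0"
    and s: "0 \<le> s"
  shows "distr_fun (\<lambda>t. \<Sum>k<m. f k t) s = (\<Sum>k<m. distr_fun (f k) s)"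
  using meas disj
proof (induction m)
  case 0
  have h: "(s < 0) = False" using s by simp
  show ?case by (simp add: distr_fun_def h)
next
  case (Suc m)
  have IH: "distr_fun (\<lambda>t. \<Sum>k<m. f k t) s = (\<Sum>k<m. distr_fun (f k) s)"
    using Suc.prems by (intro Suc.IH) auto
  have m1: "(\<lambda>t. \<Sum>k<m. f k t) \<in> borel_measurable I01"
    using Suc.prems(1) by (intro borel_measurable_sum) auto
  have m2: "f m \<in> borel_measurable I01" using Suc.prems(1) by auto
  have "AE t in I01. \<forall>k\<in>{..<m}. f k t = 0 \<or> f m t = 0"
    by (rule AE_finite_allI) (use Suc.prems(2) in auto)
  then have ae: "AE t in I01. (\<Sum>k<m. f k t) = 0 \<or> f m t = 0"
    by eventually_elim (metis (mono_tags, lifting) lessThan_iff sum.neutral)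
  have "distr_fun (\<lambda>t. \<Sum>k<Suc m. f k t) s = distr_fun (\<lambda>t. (\<Sum>k<m. f k t) + f m t) s"
    by simp
  also have "\<dots> = distr_fun (\<lambda>t. \<Sum>k<m. f k t) s + distr_fun (f m) s"
    using distr_add[OF m1 m2 ae s] by simp
  finally show ?case using IH by simp
qed

lemma distr_scale:
  fixes f :: "real \<Rightarrow> real"
  assumes "0 \<le> s"
  shows "distr_fun (\<lambda>t. c * f t) s = (if c = 0 then 0 else distr_fun f (s / \<bar>c\<bar>))"
proof (cases "c = 0")
  case True
  have h: "(s < 0) = False" using assms by simp
  show ?thesis using True by (simp add: distr_fun_def h)
next
  case False
  have "{t \<in> {0..1}. s < \<bar>c * f t\<bar>} = {t \<in> {0..1}. s / \<bar>c\<bar> < \<bar>f t\<bar>}"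
    using False by (auto simp: abs_mult divide_less_eq mult.commute)
  then show ?thesis using False by (simp add: distr_fun_def)
qed

lemma distr_sum_eq:
  fixes f g :: "nat \<Rightarrow> real \<Rightarrow> real"
  assumes mf: "\<And>k. k < m \<Longrightarrow> f k \<in> borel_measurable I01"
    and mg: "\<And>k. k < m \<Longrightarrow> g k \<in> borel_measurable I01"
    and df: "\<And>k l. k < m \<Longrightarrow> l < m \<Longrightarrow> k \<noteq> l \<Longrightarrow> AE t in I01. f k t = 0 \<or> f l t = 0"
    and dg: "\<And>k l. k < m \<Longrightarrow> l < m \<Longrightarrow> k \<noteq> l \<Longrightarrow> AE t in I01. g k t = 0 \<or> g l t = 0"
    and eq: "\<And>k s. k < m \<Longrightarrow> 0 \<le> s \<Longrightarrow> distr_fun (f k) s = distr_fun (g k) s"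
    and s: "0 \<le> s"
  shows "distr_fun (\<lambda>t. \<Sum>k<m. c k * f k t) s = distr_fun (\<lambda>t. \<Sum>k<m. c k * g k t) s"
proof -
  have "distr_fun (\<lambda>t. \<Sum>k<m. c k * f k t) s = (\<Sum>k<m. distr_fun (\<lambda>t. c k * f k t) s)"
  proof (rule distr_sum[OF _ _ s])
    fix k l assume "k < m" "l < m" "k \<noteq> l"
    show "AE t in I01. c k * f k t = 0 \<or> c l * f l t = 0"
      using df[OF \<open>k < m\<close> \<open>l < m\<close> \<open>k \<noteq> l\<close>] by eventually_elim auto
  qed (use mf in auto)
  also have "\<dots> = (\<Sum>k<m. distr_fun (\<lambda>t. c k * g k t) s)"
  proof (rule sum.cong)
    fix k assume "k \<in> {..<m}"
    then show "distr_fun (\<lambda>t. c k * f k t) s = distr_fun (\<lambda>t. c k * g k t) s"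
      using eq s by (simp add: distr_scale)
  qed simp
  also have "\<dots> = distr_fun (\<lambda>t. \<Sum>k<m. c k * g k t) s"
  proof (rule distr_sum[OF _ _ s, symmetric])
    fix k l assume "k < m" "l < m" "k \<noteq> l"
    show "AE t in I01. c k * g k t = 0 \<or> c l * g l t = 0"
      using dg[OF \<open>k < m\<close> \<open>l < m\<close> \<open>k \<noteq> l\<close>] by eventually_elim auto
  qed (use mg in auto)
  finally show ?thesis .
qed



definition qf :: "(real \<Rightarrow> real) \<Rightarrow> real \<Rightarrow> real" where
  "qf f u = Inf {s. 0 \<le> s \<and> distr_fun f s \<le> u}"

lemma distr_right_cont:
  fixes f :: "real \<Rightarrow> real"
  assumes f: "f \<in> borel_measurable I01"
    and le: "\<And>n. distr_fun f (q + 1 / real (Suc n)) \<le> u"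
  shows "distr_fun f q \<le> u"
proof -
  define A where "A n = {t \<in> {0..1}. q + 1 / real (Suc n) < \<bar>f t\<bar>}" for n
  have r: "range A \<subseteq> sets I01" using sets_distr[OF f] by (auto simp: A_def)
  have inc: "incseq A"
  proof (rule incseq_SucI)
    fix n
    have "1 / real (Suc (Suc n)) \<le> 1 / real (Suc n)"
      by (simp add: frac_le)
    then show "A n \<subseteq> A (Suc n)" by (auto simp: A_def)
  qed
  have U: "(\<Union>n. A n) = {t \<in> {0..1}. q < \<bar>f t\<bar>}"
  proof
    show "(\<Union>n. A n) \<subseteq> {t \<in> {0..1}. q < \<bar>f t\<bar>}"
      by (auto simp: A_def) (smt (verit) of_nat_0_le_iff divide_nonneg_nonneg)
    show "{t \<in> {0..1}. q < \<bar>f t\<bar>} \<subseteq> (\<Union>n. A n)"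
    proof
      fix t assume t: "t \<in> {t \<in> {0..1}. q < \<bar>f t\<bar>}"
      then have "0 < \<bar>f t\<bar> - q" by simp
      then obtain n where n: "1 / real (Suc n) < \<bar>f t\<bar> - q"
        using nat_approx_posE by blast
      then have "t \<in> A n" using t by (auto simp: A_def)
      then show "t \<in> (\<Union>n. A n)" by blast
    qed
  qed
  have "(\<lambda>n. measure I01 (A n)) \<longlonglongrightarrow> measure I01 (\<Union>n. A n)"
    by (rule finite_measure.finite_Lim_measure_incseq[OF fin_I01 r inc])
  then have "(\<lambda>n. distr_fun f (q + 1 / real (Suc n))) \<longlonglongrightarrow> distr_fun f q"
    unfolding U by (simp add: A_def distr_fun_def)
  then show ?thesis
    by (rule LIMSEQ_le_const2) (use le in auto)
qed

lemma distr_small: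
  fixes f :: "real \<Rightarrow> real"
  assumes f: "f \<in> borel_measurable I01" and u: "0 < u"
  shows "\<exists>s\<ge>0. distr_fun f s \<le> u"
proof -
  define B where "B n = {t \<in> {0..1}. real n < \<bar>f t\<bar>}" for n
  have r: "range B \<subseteq> sets I01" using sets_distr[OF f] by (auto simp: B_def)
  have dec: "decseq B"
    by (rule decseq_SucI) (auto simp: B_def)
  have I: "(\<Inter>n. B n) = {}"
  proof -
    have "t \<notin> (\<Inter>n. B n)" for t
    proof
      assume "t \<in> (\<Inter>n. B n)"
      moreover obtain n where "\<bar>f t\<bar> < real n" using reals_Archimedean2 by blast
      ultimately show False unfolding B_def by (smt (verit) INT_iff UNIV_I mem_Collect_eq)
    qed
    then show ?thesis by blast
  qed
  have "(\<lambda>n. measure I01 (B n)) \<longlonglongrightarrow> 0"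
    using finite_measure.finite_Lim_measure_decseq[OF fin_I01 r dec] unfolding I by simp
  then obtain n where "measure I01 (B n) < u"
    using u by (metis (no_types, lifting) LIMSEQ_unique order_refl lim_sequentially
        abs_of_nonneg diff_zero dist_real_def measure_nonneg)
  then show ?thesis
    by (intro exI[of _ "real n"]) (auto simp: B_def distr_fun_def)
qed

lemma qf_spec:
  fixes f :: "real \<Rightarrow> real"
  assumes f: "f \<in> borel_measurable I01" and u: "0 < u"
  shows "0 \<le> qf f u" and "\<And>s. 0 \<le> s \<Longrightarrow> s < qf f u \<longleftrightarrow> u < distr_fun f s"
proof -
  define S where "S = {s. 0 \<le> s \<and> distr_fun f s \<le> u}"
  have ne: "S \<noteq> {}" using distr_small[OF f u] by (auto simp: S_def)
  have bdd: "bdd_below S" by (auto simp: S_def bdd_below_def)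
  have q0: "0 \<le> Inf S" by (rule cInf_greatest[OF ne]) (auto simp: S_def)
  then show "0 \<le> qf f u" by (simp add: qf_def S_def)
  have qS: "distr_fun f (Inf S) \<le> u"
  proof (rule distr_right_cont[OF f])
    fix n
    have "Inf S < Inf S + 1 / real (Suc n)" by simp
    then obtain s where s: "s \<in> S" "s < Inf S + 1 / real (Suc n)"
      using cInf_lessD[OF ne] by blast
    have "distr_fun f (Inf S + 1 / real (Suc n)) \<le> distr_fun f s"
      by (rule distr_mono[OF f]) (use s in simp)
    also have "\<dots> \<le> u" using s by (simp add: S_def)
    finally show "distr_fun f (Inf S + 1 / real (Suc n)) \<le> u" .
  qed
  fix s :: real assume s: "0 \<le> s"
  show "s < qf f u \<longleftrightarrow> u < distr_fun f s"
  proof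
    assume "s < qf f u"
    then have "s < Inf S" by (simp add: qf_def S_def)
    then show "u < distr_fun f s"
      using cInf_lower[OF _ bdd, of s] s by (force simp: S_def)
  next
    assume us: "u < distr_fun f s"
    show "s < qf f u"
    proof (rule ccontr)
      assume "\<not> s < qf f u"
      then have "Inf S \<le> s" by (simp add: qf_def S_def)
      then have "distr_fun f s \<le> distr_fun f (Inf S)" by (rule distr_mono[OF f])
      then show False using qS us by simp
    qed
  qed
qed



definition place :: "(real \<Rightarrow> real) \<Rightarrow> real \<Rightarrow> real \<Rightarrow> real \<Rightarrow> real" where
  "place f a L t = (if a < t \<and> t < a + L then qf f (t - a) else 0)"

lemma place_nonneg:
  assumes f: "f \<in> borel_measurable I01"
  shows "0 \<le> place f a L t"
  using qf_spec(1)[OF f] by (simp add: place_def)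

lemma place_set:
  assumes f: "f \<in> borel_measurable I01" and L: "distr_fun f 0 \<le> L" and s: "0 \<le> s"
  shows "{t. s < \<bar>place f a L t\<bar>} = {a<..<a + distr_fun f s}"
proof -
  have dL: "distr_fun f s \<le> L" using distr_mono[OF f s] L by simp
  show ?thesis
  proof (intro set_eqI iffI)
    fix t assume "t \<in> {t. s < \<bar>place f a L t\<bar>}"
    then have t: "s < \<bar>place f a L t\<bar>" by simp
    then have in1: "a < t \<and> t < a + L" using s by (auto simp: place_def split: if_splits)
    then have "s < qf f (t - a)" using t qf_spec(1)[OF f, of "t - a"] by (simp add: place_def)
    then have "t - a < distr_fun f s" using qf_spec(2)[OF f _ s, of "t - a"] in1 by simp
    then show "t \<in> {a<..<a + distr_fun f s}" using in1 by simp
  next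
    fix t assume "t \<in> {a<..<a + distr_fun f s}"
    then have t: "a < t" "t - a < distr_fun f s" by auto
    then have in1: "a < t \<and> t < a + L" using dL by simp
    have "s < qf f (t - a)" using qf_spec(2)[OF f _ s, of "t - a"] t by simp
    then show "t \<in> {t. s < \<bar>place f a L t\<bar>}"
      using in1 qf_spec(1)[OF f, of "t - a"] by (simp add: place_def)
  qed
qed

lemma place_meas:
  assumes f: "f \<in> borel_measurable I01" and L: "distr_fun f 0 \<le> L"
  shows "place f a L \<in> borel_measurable I01"
  unfolding borel_measurable_iff_greater
proof
  fix s :: real
  show "{w \<in> space I01. s < place f a L w} \<in> sets I01"
  proof (cases "0 \<le> s")
    case True
    have "{w \<in> space I01. s < place f a L w} = id -` {a<..<a + distr_fun f s} \<inter> space I01"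
      using place_set[OF f L True] place_nonneg[OF f] by (auto simp: set_eq_iff)
    also have "\<dots> \<in> sets I01"
      by (rule measurable_sets[OF id_borel_measurable_lebesgue_on]) simp
    finally show ?thesis .
  next
    case False
    then have "{w \<in> space I01. s < place f a L w} = space I01"
      using place_nonneg[OF f, of a L] by (auto simp: not_le less_le_trans)
    then show ?thesis by simp
  qed
qed

lemma measure_I01_Ioo:
  assumes "0 \<le> a" "a \<le> b" "b \<le> 1"
  shows "measure I01 {a<..<b} = b - a"
proof -
  have "measure I01 {a<..<b} = measure lebesgue {a<..<b}"
    by (rule measure_restrict_space) (use assms in auto)
  also have "\<dots> = b - a" using assms by simp
  finally show ?thesis .
qed

lemma place_distr:
  assumes f: "f \<in> borel_measurable I01" and L: "distr_fun f 0 \<le> L"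
    and a: "0 \<le> a" and aL: "a + L \<le> 1" and s: "0 \<le> s"
  shows "distr_fun (place f a L) s = distr_fun f s"
proof -
  have dL: "distr_fun f s \<le> L" using distr_mono[OF f s] L by simp
  have "{t \<in> {0..1}. s < \<bar>place f a L t\<bar>} = {a<..<a + distr_fun f s}"
    using place_set[OF f L s] a aL dL by auto
  then have "distr_fun (place f a L) s = measure I01 {a<..<a + distr_fun f s}"
    by (simp add: distr_fun_def)
  also have "\<dots> = distr_fun f s"
    using measure_I01_Ioo[of a "a + distr_fun f s"] a aL dL distr_nonneg[of f s] by simp
  finally show ?thesis .
qed

lemma place_zero:
  assumes "\<not> (a < t \<and> t < a + L)"
  shows "place f a L t = 0"
  using assms unfolding place_def by (simp only: if_False)



context
  fixes Xs :: "(real \<Rightarrow> real) set" and N :: "(real \<Rightarrow> real) \<Rightarrow> real"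
  assumes ss: "symmetric_space Xs N"
begin

lemmas ssD = ss[unfolded symmetric_space_def]

lemma ss_meas: "f \<in> Xs \<Longrightarrow> f \<in> borel_measurable I01"
  using ssD[THEN conjunct1] by blast
lemma ss_zero: "(\<lambda>t. 0) \<in> Xs"
  using ssD[THEN conjunct2, THEN conjunct1] by blast
lemma ss_add: "f \<in> Xs \<Longrightarrow> g \<in> Xs \<Longrightarrow> (\<lambda>t. f t + g t) \<in> Xs"
  using ssD[THEN conjunct2, THEN conjunct2, THEN conjunct1] by blast
lemma ss_smul: "f \<in> Xs \<Longrightarrow> (\<lambda>t. c * f t) \<in> Xs"
  using ssD[THEN conjunct2, THEN conjunct2, THEN conjunct2, THEN conjunct1] by blast
lemma ss_nonneg: "f \<in> Xs \<Longrightarrow> 0 \<le> N f"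
  using ssD[THEN conjunct2, THEN conjunct2, THEN conjunct2, THEN conjunct2, THEN conjunct1] by blast
lemma ss_hom: "f \<in> Xs \<Longrightarrow> N (\<lambda>t. c * f t) = \<bar>c\<bar> * N f"
  using ssD[THEN conjunct2, THEN conjunct2, THEN conjunct2, THEN conjunct2, THEN conjunct2, THEN conjunct1] by blast
lemma ss_tri: "f \<in> Xs \<Longrightarrow> g \<in> Xs \<Longrightarrow> N (\<lambda>t. f t + g t) \<le> N f + N g"
  using ssD[THEN conjunct2, THEN conjunct2, THEN conjunct2, THEN conjunct2, THEN conjunct2, THEN conjunct2, THEN conjunct1] by blast
lemma ss_ideal: "g \<in> Xs \<Longrightarrow> f \<in> borel_measurable I01 \<Longrightarrow> (AE t in I01. \<bar>f t\<bar> \<le> \<bar>g t\<bar>)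
   \<Longrightarrow> f \<in> Xs \<and> N f \<le> N g"
  using ssD[THEN conjunct2, THEN conjunct2, THEN conjunct2, THEN conjunct2, THEN conjunct2, THEN conjunct2, THEN conjunct2, THEN conjunct2, THEN conjunct2, THEN conjunct1] by blast
lemma ss_rearr: "g \<in> Xs \<Longrightarrow> f \<in> borel_measurable I01 \<Longrightarrow> (\<forall>t\<in>{0..1}. rearr f t = rearr g t)
   \<Longrightarrow> f \<in> Xs \<and> N f = N g"
  using ssD[THEN conjunct2, THEN conjunct2, THEN conjunct2, THEN conjunct2, THEN conjunct2, THEN conjunct2, THEN conjunct2, THEN conjunct2, THEN conjunct2, THEN conjunct2] by blast

lemma ss_distr_eq:
  assumes "g \<in> Xs" "f \<in> borel_measurable I01" "\<And>s. 0 \<le> s \<Longrightarrow> distr_fun f s = distr_fun g s"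
  shows "f \<in> Xs \<and> N f = N g"
proof (rule ss_rearr[OF assms(1,2)], intro ballI)
  fix t
  have "{ereal s | s. 0 \<le> s \<and> distr_fun f s \<le> t} = {ereal s | s. 0 \<le> s \<and> distr_fun g s \<le> t}"
    using assms(3) by metis
  then show "rearr f t = rearr g t" by (simp add: rearr_def)
qed

lemma ss_sum_mem:
  assumes "finite F" "\<And>k. k \<in> F \<Longrightarrow> f k \<in> Xs"
  shows "(\<lambda>t. \<Sum>k\<in>F. f k t) \<in> Xs"
  using assms
proof (induction F rule: finite_induct)
  case empty
  then show ?case using ss_zero by simp
next
  case (insert x F)
  then show ?case using ss_add[of "f x" "\<lambda>t. \<Sum>k\<in>F. f k t"] by simp
qed

lemma ss_sum_tri:
  assumes "finite F" "\<And>k. k \<in> F \<Longrightarrow> f k \<in> Xs"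
  shows "N (\<lambda>t. \<Sum>k\<in>F. f k t) \<le> (\<Sum>k\<in>F. N (f k))"
  using assms
proof (induction F rule: finite_induct)
  case empty
  have "N (\<lambda>t. 0 * 0) = \<bar>0\<bar> * N (\<lambda>t. 0)" using ss_hom[OF ss_zero] by blast
  then show ?case by simp
next
  case (insert x F)
  have m: "(\<lambda>t. \<Sum>k\<in>F. f k t) \<in> Xs" using insert by (intro ss_sum_mem) auto
  have "N (\<lambda>t. \<Sum>k\<in>insert x F. f k t) = N (\<lambda>t. f x t + (\<Sum>k\<in>F. f k t))"
    using insert by simp
  also have "\<dots> \<le> N (f x) + N (\<lambda>t. \<Sum>k\<in>F. f k t)"
    using ss_tri[of "f x" "\<lambda>t. \<Sum>k\<in>F. f k t"] m insert by simp
  also have "\<dots> \<le> N (f x) + (\<Sum>k\<in>F. N (f k))" using insert by simp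
  finally show ?case using insert by simp
qed

end

lemma sum_shift0:
  fixes g :: "nat \<Rightarrow> 'a::comm_monoid_add"
  shows "(\<Sum>k<m + j. if k < j then 0 else g (k - j)) = (\<Sum>k<m. g k)"
proof (induction m)
  case 0
  then show ?case by simp
next
  case (Suc m)
  then show ?case by (simp add: add.commute)
qed

lemma lp_fin_nonneg: "0 \<le> lp_fin p c m"
proof (cases "p = \<infinity>")
  case True
  have "0 \<le> Max (insert 0 ((\<lambda>k. \<bar>c k\<bar>) ` {..<m}))" by (rule Max_ge) auto
  then show ?thesis by (simp add: lp_fin_def True)
next
  case False
  then show ?thesis by (simp add: lp_fin_def)
qed

lemma lp_fin_shift:
  "lp_fin p (\<lambda>k. if k < j then 0 else c (k - j)) (m + j) = lp_fin p c m"
proof (cases "p = \<infinity>")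
  case True
  have "insert 0 ((\<lambda>k. \<bar>if k < j then 0 else c (k - j)\<bar>) ` {..<m + j}) =
        insert 0 ((\<lambda>k. \<bar>c k\<bar>) ` {..<m})"
  proof (intro set_eqI iffI)
    fix x assume "x \<in> insert 0 ((\<lambda>k. \<bar>if k < j then 0 else c (k - j)\<bar>) ` {..<m + j})"
    then consider "x = 0" | k where "k < m + j" "x = \<bar>if k < j then 0 else c (k - j)\<bar>" by auto
    then show "x \<in> insert 0 ((\<lambda>k. \<bar>c k\<bar>) ` {..<m})"
    proof cases
      case 2
      show ?thesis
      proof (cases "k < j")
        case True
        then show ?thesis using 2 by simp
      next
        case False
        then have "x = \<bar>c (k - j)\<bar>" "k - j \<in> {..<m}" using 2 by auto
        then show ?thesis by blast
      qed
    qed simp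
  next
    fix x assume "x \<in> insert 0 ((\<lambda>k. \<bar>c k\<bar>) ` {..<m})"
    then consider "x = 0" | k where "k < m" "x = \<bar>c k\<bar>" by auto
    then show "x \<in> insert 0 ((\<lambda>k. \<bar>if k < j then 0 else c (k - j)\<bar>) ` {..<m + j})"
    proof cases
      case 2
      have "x = (\<lambda>k. \<bar>if k < j then 0 else c (k - j)\<bar>) (k + j)" using 2 by simp
      moreover have "k + j \<in> {..<m + j}" using 2 by simp
      ultimately show ?thesis by (intro insertI2 image_eqI[where x="k+j"])
    qed simp
  qed
  then show ?thesis using True by (simp add: lp_fin_def)
next
  case False
  have "(\<Sum>k<m + j. \<bar>if k < j then 0 else c (k - j)\<bar> powr real_of_ereal p) =
        (\<Sum>k<m + j. if k < j then 0 else \<bar>c (k - j)\<bar> powr real_of_ereal p)"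
    by (rule sum.cong) auto
  also have "\<dots> = (\<Sum>k<m. \<bar>c k\<bar> powr real_of_ereal p)" by (rule sum_shift0)
  finally show ?thesis using False by (simp add: lp_fin_def)
qed

lemma subseq_small:
  fixes f :: "nat \<Rightarrow> real" and e :: "nat \<Rightarrow> real"
  assumes f: "f \<longlonglongrightarrow> 0" and e: "\<And>k. 0 < e k"
  shows "\<exists>\<sigma>. strict_mono \<sigma> \<and> (\<forall>k. f (\<sigma> k) \<le> e k)"
proof -
  have "\<forall>k. \<exists>M. \<forall>n\<ge>M. \<bar>f n\<bar> < e k"
    using f e unfolding LIMSEQ_iff by simp
  then have "\<exists>M. \<forall>k. \<forall>n\<ge>M k. \<bar>f n\<bar> < e k" by (rule choice)
  then obtain M :: "nat \<Rightarrow> nat" where M: "\<And>k n. M k \<le> n \<Longrightarrow> \<bar>f n\<bar> < e k" by blast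
  define \<sigma> where "\<sigma> k = k + (\<Sum>i\<le>k. M i)" for k
  have "strict_mono \<sigma>"
    by (rule strict_monoI_Suc) (simp add: \<sigma>_def)
  moreover have "f (\<sigma> k) \<le> e k" for k
  proof -
    have "M k \<le> (\<Sum>i\<le>k. M i)" by (rule member_le_sum) auto
    then have "M k \<le> \<sigma> k" by (simp add: \<sigma>_def)
    then have "\<bar>f (\<sigma> k)\<bar> < e k" by (rule M)
    then show ?thesis by linarith
  qed
  ultimately show ?thesis by blast
qed

definition slot :: "nat \<Rightarrow> real set" where
  "slot n = {(1/2)^(n+1) <..< (1/2)^(n+1) + (1/2)^(n+1)}"

lemma slot_alt: "slot n = {(1/2)^(n+1) <..< (1/2::real)^n}"
  by (simp add: slot_def)

lemma slot_disj:
  assumes "t \<in> slot n" "t \<in> slot n'"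
  shows "n = n'"
proof (rule ccontr)
  assume ne: "n \<noteq> n'"
  have key: "False" if "t \<in> slot a" "t \<in> slot b" "a < b" for a b
  proof -
    have "(1/2::real)^b \<le> (1/2)^(a+1)"
      by (rule power_decreasing) (use that in auto)
    then show False using that by (auto simp: slot_alt)
  qed
  from ne have "n < n' \<or> n' < n" by arith
  then show False using key[OF assms] key[OF assms(2) assms(1)] by blast
qed



lemma sum_single:
  fixes g :: "nat \<Rightarrow> 'a::comm_monoid_add"
  assumes "finite F" "k0 \<in> F" "\<And>k. k \<in> F \<Longrightarrow> k \<noteq> k0 \<Longrightarrow> g k = 0"
  shows "(\<Sum>k\<in>F. g k) = g k0"
proof -
  have "(\<Sum>k\<in>F. g k) = g k0 + (\<Sum>k\<in>F - {k0}. g k)"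
    using assms(1,2) by (rule sum.remove)
  also have "(\<Sum>k\<in>F - {k0}. g k) = 0" using assms(3) by (intro sum.neutral) auto
  finally show ?thesis by simp
qed

lemma geom_half: "(\<Sum>i\<le>k. (1/2::real)^(i+1)) \<le> 1"
proof -
  have "(\<Sum>i\<le>k. (1/2::real)^(i+1)) = 1 - (1/2)^(k+1)"
    by (induction k) (auto simp: field_simps)
  then show ?thesis by simp
qed

lemma disj_sum_le1:
  fixes x :: "nat \<Rightarrow> real \<Rightarrow> real"
  assumes meas: "\<And>n. x n \<in> borel_measurable I01" and d: "disjoint_seq x"
  shows "(\<Sum>n<M. distr_fun (x n) 0) \<le> 1"
proof -
  have "(\<Sum>n<M. distr_fun (x n) 0) = distr_fun (\<lambda>t. \<Sum>n<M. x n t) 0"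
    by (rule distr_sum[symmetric]) (use meas d in \<open>auto simp: disjoint_seq_def\<close>)
  also have "\<dots> \<le> 1" by (rule distr_le1)
  finally show ?thesis .
qed

lemma disj_distr_lim:
  fixes x :: "nat \<Rightarrow> real \<Rightarrow> real"
  assumes meas: "\<And>n. x n \<in> borel_measurable I01" and d: "disjoint_seq x"
  shows "(\<lambda>n. distr_fun (x n) 0) \<longlonglongrightarrow> 0"
proof -
  have "summable (\<lambda>n. distr_fun (x n) 0)"
    by (rule summableI_nonneg_bounded[where x=1]) (use disj_sum_le1[OF meas d] distr_nonneg in auto)
  then show ?thesis by (rule summable_LIMSEQ_zero)
qed

theorem mainTheorem7:
  fixes Xs :: "(real \<Rightarrow> real) set" and N :: "(real \<Rightarrow> real) \<Rightarrow> real" and p :: ereal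
  assumes "1 < p" and "symmetric_space Xs N" and "has_Dp Xs N p"
  shows "has_UDp Xs N p"
proof (rule ccontr)
  have ss: "symmetric_space Xs N" by (rule assms(2))
  have D: "has_Dp Xs N p" by (rule assms(3))
  assume nUD: "\<not> has_UDp Xs N p"
  define a :: "nat \<Rightarrow> real" where "a j = (1/2)^(j+1)" for j
  define Cj :: "nat \<Rightarrow> real" where "Cj j = (real j + 1) / a j" for j
  have a_pos: "0 < a j" for j by (simp add: a_def)
  have Cj_pos: "0 < Cj j" for j using a_pos[of j] by (simp add: Cj_def)
  have ex: "\<exists>x. (\<forall>n. x n \<in> Xs \<and> N (x n) \<le> 1) \<and> disjoint_seq x \<and>
          (\<forall>r. strict_mono r \<longrightarrow> \<not> upper_est N p (Cj j) (\<lambda>k. x (r k)))" for j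
  proof -
    have "\<not> (\<forall>x. (\<forall>n. x n \<in> Xs \<and> N (x n) \<le> 1) \<and> disjoint_seq x \<longrightarrow>
        (\<exists>r. strict_mono r \<and> upper_est N p (Cj j) (\<lambda>k. x (r k))))"
      using nUD Cj_pos[of j] unfolding has_UDp_def by blast
    then show ?thesis by blast
  qed
  then have "\<forall>j. \<exists>x. (\<forall>n. x n \<in> Xs \<and> N (x n) \<le> 1) \<and> disjoint_seq x \<and>
          (\<forall>r. strict_mono r \<longrightarrow> \<not> upper_est N p (Cj j) (\<lambda>k. x (r k)))" by blast
  then have "\<exists>X. \<forall>j. (\<forall>n. X j n \<in> Xs \<and> N (X j n) \<le> 1) \<and> disjoint_seq (X j) \<and>
          (\<forall>r. strict_mono r \<longrightarrow> \<not> upper_est N p (Cj j) (\<lambda>k. X j (r k)))" by (rule choice)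
  then obtain X where XX: "\<forall>j. (\<forall>n. X j n \<in> Xs \<and> N (X j n) \<le> 1) \<and> disjoint_seq (X j) \<and>
          (\<forall>r. strict_mono r \<longrightarrow> \<not> upper_est N p (Cj j) (\<lambda>k. X j (r k)))" by blast
  have X: "\<And>j n. X j n \<in> Xs" "\<And>j n. N (X j n) \<le> 1" "\<And>j. disjoint_seq (X j)"
    using XX by blast+
  have Xfail: "\<And>j r. strict_mono r \<Longrightarrow> \<not> upper_est N p (Cj j) (\<lambda>k. X j (r k))"
    using XX by blast
  have Xm: "X j n \<in> borel_measurable I01" for j n using ss_meas[OF ss X(1)] .
  define len :: "nat \<Rightarrow> real" where "len n = (1/2)^(n+1)" for n
  have len_pos: "0 < len n" for n by (simp add: len_def)
  have "\<forall>j. \<exists>\<sigma>. strict_mono \<sigma> \<and> (\<forall>k. distr_fun (X j (\<sigma> k)) 0 \<le> len (prod_encode (j, k)))"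
  proof
    fix j
    show "\<exists>\<sigma>. strict_mono \<sigma> \<and> (\<forall>k. distr_fun (X j (\<sigma> k)) 0 \<le> len (prod_encode (j, k)))"
      by (rule subseq_small[OF disj_distr_lim[OF Xm X(3)]]) (rule len_pos)
  qed
  then have "\<exists>\<sigma>. \<forall>j. strict_mono (\<sigma> j) \<and> (\<forall>k. distr_fun (X j (\<sigma> j k)) 0 \<le> len (prod_encode (j, k)))"
    by (rule choice)
  then obtain \<sigma> where \<sigma>\<sigma>: "\<forall>j. strict_mono (\<sigma> j) \<and> (\<forall>k. distr_fun (X j (\<sigma> j k)) 0 \<le> len (prod_encode (j, k)))"
    by blast
  have \<sigma>: "\<And>j. strict_mono (\<sigma> j)"
    and \<sigma>len: "\<And>j k. distr_fun (X j (\<sigma> j k)) 0 \<le> len (prod_encode (j, k))"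
    using \<sigma>\<sigma> by blast+
  define W where "W j k = place (X j (\<sigma> j k)) (len (prod_encode (j, k))) (len (prod_encode (j, k)))" for j k
  have W_meas: "W j k \<in> borel_measurable I01" for j k
    unfolding W_def by (rule place_meas[OF Xm \<sigma>len])
  have W_distr: "distr_fun (W j k) s = distr_fun (X j (\<sigma> j k)) s" if "0 \<le> s" for j k s
  proof -
    have "len n + len n \<le> 1" for n
    proof -
      have "len n + len n = (1/2)^n" by (simp add: len_def)
      also have "\<dots> \<le> 1" by (simp add: power_le_one)
      finally show ?thesis .
    qed
    then show ?thesis unfolding W_def
      by (intro place_distr[OF Xm \<sigma>len _ _ that]) (auto intro: less_imp_le len_pos)
  qed
  have W_Xs: "W j k \<in> Xs \<and> N (W j k) = N (X j (\<sigma> j k))" for j k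
    by (rule ss_distr_eq[OF ss X(1) W_meas W_distr])
  have W_supp: "t \<in> slot (prod_encode (j, k))" if "W j k t \<noteq> 0" for j k t
  proof (rule ccontr)
    assume "t \<notin> slot (prod_encode (j, k))"
    then have "\<not> (len (prod_encode (j, k)) < t \<and> t < len (prod_encode (j, k)) + len (prod_encode (j, k)))"
      by (simp add: slot_def len_def)
    then have "W j k t = 0" unfolding W_def by (rule place_zero)
    then show False using that by simp
  qed
  have W_disj: "W j k t = 0 \<or> W j' k' t = 0" if "(j, k) \<noteq> (j', k')" for j k j' k' t
  proof (rule ccontr)
    assume "\<not> (W j k t = 0 \<or> W j' k' t = 0)"
    then have "t \<in> slot (prod_encode (j, k))" "t \<in> slot (prod_encode (j', k'))"
      using W_supp by auto
    then have "prod_encode (j, k) = prod_encode (j', k')" by (rule slot_disj)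
    then have "(j, k) = (j', k')" using inj_prod_encode[of UNIV] by (simp add: inj_on_def)
    then show False using that by simp
  qed
  define Y where "Y k t = (\<Sum>i\<le>k. a i * W i k t)" for k t
  have Y_Xs: "Y k \<in> Xs" for k
  proof -
    have "(\<lambda>t. \<Sum>i\<le>k. a i * W i k t) \<in> Xs"
      by (rule ss_sum_mem[OF ss]) (auto intro: ss_smul[OF ss] W_Xs[THEN conjunct1])
    then show ?thesis by (simp add: Y_def[abs_def])
  qed
  have Y_N: "N (Y k) \<le> 1" for k
  proof -
    have "N (\<lambda>t. \<Sum>i\<le>k. a i * W i k t) \<le> (\<Sum>i\<le>k. N (\<lambda>t. a i * W i k t))"
      by (rule ss_sum_tri[OF ss]) (auto intro: ss_smul[OF ss] W_Xs[THEN conjunct1])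
    also have "\<dots> = (\<Sum>i\<le>k. a i * N (W i k))"
      using ss_hom[OF ss W_Xs[THEN conjunct1]] a_pos by (simp add: less_imp_le)
    also have "\<dots> \<le> (\<Sum>i\<le>k. a i * 1)"
    proof (rule sum_mono)
      fix i
      have "N (W i k) \<le> 1" using W_Xs[of i k] X(2) by simp
      then show "a i * N (W i k) \<le> a i * 1" using a_pos[of i] by (intro mult_left_mono) auto
    qed
    also have "\<dots> \<le> 1" using geom_half[of k] by (simp add: a_def)
    finally show ?thesis by (simp add: Y_def[abs_def])
  qed
  have Y_disj: "Y k t = 0 \<or> Y k' t = 0" if "k \<noteq> k'" for k k' t
  proof (rule ccontr)
    assume "\<not> (Y k t = 0 \<or> Y k' t = 0)"
    then have "(\<Sum>i\<le>k. a i * W i k t) \<noteq> 0" "(\<Sum>i\<le>k'. a i * W i k' t) \<noteq> 0"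
      unfolding Y_def by auto
    then obtain i i' where "a i * W i k t \<noteq> 0" "a i' * W i' k' t \<noteq> 0"
      using sum.neutral by (metis (no_types, lifting))
    then have "W i k t \<noteq> 0" "W i' k' t \<noteq> 0" by auto
    then show False using W_disj[of i k i' k' t] that by auto
  qed
  have "disjoint_seq Y"
    unfolding disjoint_seq_def using Y_disj by auto
  moreover have "\<forall>n. Y n \<in> Xs \<and> N (Y n) \<le> 1" using Y_Xs Y_N by blast
  ultimately have "\<exists>r C. strict_mono r \<and> C > 0 \<and> upper_est N p C (\<lambda>k. Y (r k))"
    using D unfolding has_Dp_def by blast
  then obtain r C where r: "strict_mono r" and C: "C > 0" and up: "upper_est N p C (\<lambda>k. Y (r k))"
    by blast
  define j where "j = nat \<lceil>C\<rceil>"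
  have Cj_ge: "C \<le> real j + 1" unfolding j_def by linarith
  define \<rho> where "\<rho> k = \<sigma> j (r (k + j))" for k
  have r_inj: "r k = r l \<longleftrightarrow> k = l" for k l using r strict_mono_eq by blast
  have \<rho>_mono: "strict_mono \<rho>"
    unfolding \<rho>_def strict_mono_def using \<sigma>[of j] r by (simp add: strict_mono_less)
  have "upper_est N p (Cj j) (\<lambda>k. X j (\<rho> k))"
    unfolding upper_est_def
  proof (intro allI)
    fix m c
    define F where "F t = (\<Sum>k<m. c k * X j (\<rho> k) t)" for t
    define G where "G t = (\<Sum>k<m. c k * W j (r (k + j)) t)" for t
    define H where "H t = (\<Sum>k<m. c k * Y (r (k + j)) t)" for t
    have F_Xs: "F \<in> Xs"
      unfolding F_def[abs_def] by (rule ss_sum_mem[OF ss]) (auto intro: ss_smul[OF ss] X(1))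
    have G_meas: "G \<in> borel_measurable I01"
      unfolding G_def[abs_def]
    proof (rule borel_measurable_sum)
      fix k
      show "(\<lambda>t. c k * W j (r (k + j)) t) \<in> borel_measurable I01"
        by (rule borel_measurable_times[OF borel_measurable_const W_meas])
    qed
    have FG: "G \<in> Xs \<and> N G = N F"
    proof (rule ss_distr_eq[OF ss F_Xs G_meas])
      fix s :: real assume s: "0 \<le> s"
      show "distr_fun G s = distr_fun F s"
        unfolding G_def[abs_def] F_def[abs_def]
      proof (rule distr_sum_eq[OF _ _ _ _ _ s])
        fix k l assume kl: "k < m" "l < m" "k \<noteq> l"
        then have "(j, r (k + j)) \<noteq> (j, r (l + j))" using r_inj by simp
        then show "AE t in I01. W j (r (k + j)) t = 0 \<or> W j (r (l + j)) t = 0"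
          using W_disj by blast
        have "\<rho> k \<noteq> \<rho> l" using kl \<rho>_mono strict_mono_eq by blast
        then show "AE t in I01. X j (\<rho> k) t = 0 \<or> X j (\<rho> l) t = 0"
          using X(3)[of j] unfolding disjoint_seq_def by blast
      next
        fix k and s' :: real assume "k < m" "0 \<le> s'"
        show "distr_fun (W j (r (k + j))) s' = distr_fun (X j (\<rho> k)) s'"
          using W_distr[OF \<open>0 \<le> s'\<close>] by (simp add: \<rho>_def)
      qed (use W_meas Xm in auto)
    qed
    have H_Xs: "H \<in> Xs"
      unfolding H_def[abs_def] by (rule ss_sum_mem[OF ss]) (auto intro: ss_smul[OF ss] Y_Xs)
    have Hsum: "(\<lambda>t. \<Sum>k<m + j. (if k < j then 0 else c (k - j)) * Y (r k) t) = H"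
    proof (rule ext)
      fix t
      have "(\<Sum>k<m + j. (if k < j then 0 else c (k - j)) * Y (r k) t) =
            (\<Sum>k<m + j. if k < j then 0 else c (k - j) * Y (r (k - j + j)) t)"
        by (rule sum.cong) auto
      also have "\<dots> = (\<Sum>k<m. c k * Y (r (k + j)) t)" by (rule sum_shift0)
      finally show "(\<Sum>k<m + j. (if k < j then 0 else c (k - j)) * Y (r k) t) = H t"
        by (simp add: H_def)
    qed
    have HN: "N H \<le> C * lp_fin p c m"
    proof -
      have up': "\<forall>c'. N (\<lambda>t. \<Sum>k<m + j. c' k * Y (r k) t) \<le> C * lp_fin p c' (m + j)"
        using up unfolding upper_est_def by (rule spec)
      have "N (\<lambda>t. \<Sum>k<m + j. (if k < j then 0 else c (k - j)) * Y (r k) t)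
          \<le> C * lp_fin p (\<lambda>k. if k < j then 0 else c (k - j)) (m + j)"
        using up' by (rule spec)
      then show ?thesis unfolding Hsum lp_fin_shift .
    qed
    have pw: "\<bar>a j * G t\<bar> \<le> \<bar>H t\<bar>" for t
    proof (cases "\<exists>k0<m. W j (r (k0 + j)) t \<noteq> 0")
      case True
      then obtain k0 where k0: "k0 < m" "W j (r (k0 + j)) t \<noteq> 0" by blast
      have Wz: "W i n t = 0" if "(i, n) \<noteq> (j, r (k0 + j))" for i n
        using W_disj[OF that, of t] k0(2) by blast
      have "G t = c k0 * W j (r (k0 + j)) t"
        unfolding G_def
      proof (rule sum_single)
        fix k assume "k \<in> {..<m}" "k \<noteq> k0"
        then have "(j, r (k + j)) \<noteq> (j, r (k0 + j))" using r_inj by simp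
        then show "c k * W j (r (k + j)) t = 0" using Wz by simp
      qed (use k0 in auto)
      moreover have "H t = c k0 * Y (r (k0 + j)) t"
        unfolding H_def
      proof (rule sum_single)
        fix k assume "k \<in> {..<m}" "k \<noteq> k0"
        then have "\<And>i. (i, r (k + j)) \<noteq> (j, r (k0 + j))" using r_inj by simp
        then show "c k * Y (r (k + j)) t = 0" using Wz by (simp add: Y_def)
      qed (use k0 in auto)
      moreover have "Y (r (k0 + j)) t = a j * W j (r (k0 + j)) t"
        unfolding Y_def
      proof (rule sum_single)
        have "k0 + j \<le> r (k0 + j)" using r by (rule seq_suble)
        then show "j \<in> {..r (k0 + j)}" by simp
        fix i assume "i \<in> {..r (k0 + j)}" "i \<noteq> j"
        then show "a i * W i (r (k0 + j)) t = 0" using Wz by simp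
      qed simp
      ultimately have "H t = a j * G t" by simp
      then show ?thesis by simp
    next
      case False
      then have "G t = 0" unfolding G_def by (intro sum.neutral) auto
      then show ?thesis by simp
    qed
    have aG_meas: "(\<lambda>t. a j * G t) \<in> borel_measurable I01"
      by (rule borel_measurable_times[OF borel_measurable_const G_meas])
    have "AE t in I01. \<bar>a j * G t\<bar> \<le> \<bar>H t\<bar>" using pw by simp
    then have "N (\<lambda>t. a j * G t) \<le> N H"
      using ss_ideal[OF ss H_Xs aG_meas] by blast
    moreover have "N (\<lambda>t. a j * G t) = a j * N F"
      using ss_hom[OF ss, of G "a j"] FG a_pos[of j] by simp
    ultimately have "a j * N F \<le> C * lp_fin p c m" using HN by linarith
    then have "N F \<le> C * lp_fin p c m / a j"
      using a_pos[of j] by (simp add: field_simps)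
    also have "\<dots> \<le> (real j + 1) * lp_fin p c m / a j"
      using Cj_ge lp_fin_nonneg[of p c m] a_pos[of j]
      by (intro divide_right_mono mult_right_mono) auto
    also have "\<dots> = Cj j * lp_fin p c m" by (simp add: Cj_def)
    finally have "N F \<le> Cj j * lp_fin p c m" .
    moreover have "F = (\<lambda>t. \<Sum>k<m. c k * X j (\<rho> k) t)" by (simp add: F_def[abs_def])
    ultimately show "N (\<lambda>t. \<Sum>k<m. c k * X j (\<rho> k) t) \<le> Cj j * lp_fin p c m"
      by simp
  qed
  then show False using Xfail[OF \<rho>_mono] by blast
qed


end
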